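(* Let $G$ be a Lie group with identity element $e$, and for an integer $c$ let $\mu_c\colon G\to G$ be the power map $\mu_c(x)=x^c$. Then for any integers $a,b$, $\mathrm{D}(\mu_a,\mu_b)=\mathrm{D}(\mu_{a-b},e)$, where $e$ denotes the constant map $G\to G$ with value $e$.
   Context: For continuous maps $f,g\colon X\to Y$, the homotopic distance $\mathrm{D}(f,g)$ is the least integer $n\geq 0$ such that there is an open cover $\{U_0,\dots,U_n\}$ of $X$ with $f|_{U_j}\simeq g|_{U_j}$ for all $j$; if no such cover exists, $\mathrm{D}(f,g)=\infty$. *)

theory Defs
  imports "HOL-Analysis.Analysis" "HOL-Algebra.Group" "HOL-Library.Extended_Nat"
begin

definition topological_group :: "('a, 'b) monoid_scheme \<Rightarrow> 'a topology \<Rightarrow> bool" where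
  "topological_group G X \<longleftrightarrow>
     group G \<and> carrier G = topspace X \<and>
     continuous_map (prod_topology X X) X (\<lambda>(x, y). x \<otimes>\<^bsub>G\<^esub> y) \<and>
     continuous_map X X (\<lambda>x. inv\<^bsub>G\<^esub> x)"

text \<open>Homotopic distance D(f,g): least n such that X is covered by open sets
U_0,...,U_n with f restricted to U_j homotopic to g restricted to U_j;
infinity (Inf of the empty set in enat) if no such cover exists.\<close>
definition homotopic_distance ::
  "'a topology \<Rightarrow> 'b topology \<Rightarrow> ('a \<Rightarrow> 'b) \<Rightarrow> ('a \<Rightarrow> 'b) \<Rightarrow> enat" where
  "homotopic_distance X Y f g =
     Inf {enat n | n. \<exists>U :: nat \<Rightarrow> 'a set.
            (\<forall>j\<le>n. openin X (U j)) \<and> (\<Union>j\<le>n. U j) = topspace X \<and>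
            (\<forall>j\<le>n. homotopic_with (\<lambda>h. True) (subtopology X (U j)) Y f g)}"

end

theory Submission
  imports Defs
begin

lemma tg_mult_cont:
  assumes "topological_group G X" "continuous_map Z X f" "continuous_map Z X g"
  shows "continuous_map Z X (\<lambda>x. f x \<otimes>\<^bsub>G\<^esub> g x)"
proof -
  have "continuous_map Z X ((\<lambda>(x, y). x \<otimes>\<^bsub>G\<^esub> y) \<circ> (\<lambda>x. (f x, g x)))"
    using assms unfolding topological_group_def
    by (intro continuous_map_compose[OF continuous_map_pairedI]) auto
  then show ?thesis by (simp add: o_def)
qed

lemma tg_natpow_cont:
  assumes "topological_group G X"
  shows "continuous_map X X (\<lambda>x. x [^]\<^bsub>G\<^esub> (n::nat))"
proof (induction n)
  case 0
  have "\<one>\<^bsub>G\<^esub> \<in> topspace X" using assms unfolding topological_group_def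
    by (metis group.is_monoid monoid.one_closed)
  then show ?case by simp
next
  case (Suc n)
  have "continuous_map X X (\<lambda>x. x [^]\<^bsub>G\<^esub> n \<otimes>\<^bsub>G\<^esub> x)"
    by (rule tg_mult_cont[OF assms Suc continuous_map_id[unfolded id_def]])
  then show ?case by simp
qed

lemma tg_intpow_cont:
  assumes "topological_group G X"
  shows "continuous_map X X (\<lambda>x. x [^]\<^bsub>G\<^esub> (i::int))"
proof -
  have inv: "continuous_map X X (\<lambda>x. inv\<^bsub>G\<^esub> x)" using assms unfolding topological_group_def by blast
  show ?thesis
  proof (cases "i < 0")
    case True
    have "continuous_map X X ((\<lambda>x. inv\<^bsub>G\<^esub> x) \<circ> (\<lambda>x. x [^]\<^bsub>G\<^esub> (nat (-i))))"
      using tg_natpow_cont[OF assms] inv by (rule continuous_map_compose)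
    moreover have "((\<lambda>x. inv\<^bsub>G\<^esub> x) \<circ> (\<lambda>x. x [^]\<^bsub>G\<^esub> (nat (-i)))) = (\<lambda>x. x [^]\<^bsub>G\<^esub> i)"
    proof (rule ext)
      fix x
      show "((\<lambda>x. inv\<^bsub>G\<^esub> x) \<circ> (\<lambda>x. x [^]\<^bsub>G\<^esub> (nat (-i)))) x = x [^]\<^bsub>G\<^esub> i"
        unfolding comp_def int_pow_def2[of G x i] if_P[OF True] ..
    qed
    ultimately show ?thesis by metis
  next
    case False
    have "(\<lambda>x. x [^]\<^bsub>G\<^esub> (nat i)) = (\<lambda>x. x [^]\<^bsub>G\<^esub> i)"
    proof (rule ext)
      fix x
      show "x [^]\<^bsub>G\<^esub> (nat i) = x [^]\<^bsub>G\<^esub> i"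
        unfolding int_pow_def2[of G x i] if_not_P[OF False] ..
    qed
    with tg_natpow_cont[OF assms, of "nat i"] show ?thesis by metis
  qed
qed

lemma tg_hom_mult:
  assumes "topological_group G X" "homotopic_with (\<lambda>h. True) Z X f g" "continuous_map Z X k"
  shows "homotopic_with (\<lambda>h. True) Z X (\<lambda>x. f x \<otimes>\<^bsub>G\<^esub> k x) (\<lambda>x. g x \<otimes>\<^bsub>G\<^esub> k x)"
proof -
  obtain h where h: "continuous_map (prod_topology (top_of_set {0..1::real}) Z) X h"
    "\<forall>x. h(0, x) = f x" "\<forall>x. h(1, x) = g x"
    using assms(2) unfolding homotopic_with_def by blast
  have "continuous_map (prod_topology (top_of_set {0..1::real}) Z) X (k \<circ> snd)"
    using assms(3) by (simp add: continuous_map_of_snd)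
  then have "continuous_map (prod_topology (top_of_set {0..1::real}) Z) X (\<lambda>p. h p \<otimes>\<^bsub>G\<^esub> (k \<circ> snd) p)"
    by (rule tg_mult_cont[OF assms(1) h(1)])
  then show ?thesis unfolding homotopic_with_def
    using h by (intro exI[of _ "\<lambda>p. h p \<otimes>\<^bsub>G\<^esub> (k \<circ> snd) p"]) auto
qed

lemma tg_key:
  fixes a b :: int
  assumes tg: "topological_group G X"
  shows "homotopic_with (\<lambda>h. True) (subtopology X U) X (\<lambda>x. x [^]\<^bsub>G\<^esub> a) (\<lambda>x. x [^]\<^bsub>G\<^esub> b)
     \<longleftrightarrow> homotopic_with (\<lambda>h. True) (subtopology X U) X (\<lambda>x. x [^]\<^bsub>G\<^esub> (a - b)) (\<lambda>x. \<one>\<^bsub>G\<^esub>)"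
    (is "?L \<longleftrightarrow> ?R")
proof -
  have grp: "group G" and car: "carrier G = topspace X" using tg unfolding topological_group_def by auto
  have cont: "continuous_map (subtopology X U) X (\<lambda>x. x [^]\<^bsub>G\<^esub> (i::int))" for i
    using tg_intpow_cont[OF tg] continuous_map_from_subtopology by blast
  have inC: "x \<in> carrier G" if "x \<in> topspace (subtopology X U)" for x
    using that car by auto
  have l1: "x [^]\<^bsub>G\<^esub> (b::int) = \<one>\<^bsub>G\<^esub> \<otimes>\<^bsub>G\<^esub> x [^]\<^bsub>G\<^esub> b" if "x \<in> topspace X" for x
  proof -
    have "x [^]\<^bsub>G\<^esub> b \<in> carrier G" using that car group.int_pow_closed[OF grp] by auto
    then show ?thesis using monoid.l_one[OF group.is_monoid[OF grp]] by simp
  qed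
  show ?thesis
  proof
    assume ?L
    from tg_hom_mult[OF tg this cont[of "-b"]] show ?R
      by (rule homotopic_with_eq)
        (auto simp: car group.int_pow_mult[OF grp, symmetric])
  next
    assume ?R
    from tg_hom_mult[OF tg this cont[of "b"]] show ?L
      by (rule homotopic_with_eq)
        (auto simp: car group.int_pow_mult[OF grp, symmetric] intro!: l1)
  qed
qed

lemma hd_cong:
  assumes "\<And>U. homotopic_with (\<lambda>h. True) (subtopology X U) Y f g \<longleftrightarrow> homotopic_with (\<lambda>h. True) (subtopology X U) Y f' g'"
  shows "homotopic_distance X Y f g = homotopic_distance X Y f' g'"
  unfolding homotopic_distance_def
  apply (rule arg_cong[where f=Inf])
  apply (simp only: assms)
  done

theorem proposition4p4:
  fixes G :: "('a, 'b) monoid_scheme" and X :: "'a topology" and a b :: int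
  assumes "topological_group G X"
  shows "homotopic_distance X X (\<lambda>x. x [^]\<^bsub>G\<^esub> a) (\<lambda>x. x [^]\<^bsub>G\<^esub> b)
         = homotopic_distance X X (\<lambda>x. x [^]\<^bsub>G\<^esub> (a - b)) (\<lambda>x. \<one>\<^bsub>G\<^esub>)"
  using tg_key[OF assms, where a=a and b=b] by (rule hd_cong)

end
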